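(* Let $G$ be a finite permutation group acting quasi-transitively on a finite set $\Omega$, with $G$-orbits $\Delta_1,\dots,\Delta_r$ where $r>1$. Then for each $i$, $G$ acts on $\Delta_i$ as a primitive $\frac{3}{2}$-transitive permutation group.
   Context: A finite permutation group $G$ on a finite set $\Omega$ is called quasi-transitive if there is a natural number $t>1$ such that $|G_{\alpha\beta}|=t$ for all two-element subsets $\{\alpha,\beta\}\subseteq\Omega$, where $G_{\alpha\beta}$ denotes the pointwise stabiliser of $\alpha$ and $\beta$ in $G$. A group acting on a set $\Delta$ is $\frac{3}{2}$-transitive if it is transitive on $\Delta$ and, for $\alpha\in\Delta$, all orbits of the point stabiliser $G_\alpha$ on $\Delta\setminus\{\alpha\}$ have the same size. *)

theory Defs
  imports "HOL-Combinatorics.Permutations"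
begin

definition perm_group :: "('a \<Rightarrow> 'a) set \<Rightarrow> 'a set \<Rightarrow> bool" where
  "perm_group G \<Omega> \<longleftrightarrow> finite \<Omega> \<and> finite G \<and> id \<in> G \<and> (\<forall>g\<in>G. g permutes \<Omega>)
     \<and> (\<forall>g\<in>G. \<forall>h\<in>G. g \<circ> h \<in> G) \<and> (\<forall>g\<in>G. inv g \<in> G)"

definition orbit :: "('a \<Rightarrow> 'a) set \<Rightarrow> 'a \<Rightarrow> 'a set" where
  "orbit G a = (\<lambda>g. g a) ` G"

definition orbits :: "('a \<Rightarrow> 'a) set \<Rightarrow> 'a set \<Rightarrow> 'a set set" where
  "orbits G \<Omega> = orbit G ` \<Omega>"

definition stabiliser :: "('a \<Rightarrow> 'a) set \<Rightarrow> 'a \<Rightarrow> ('a \<Rightarrow> 'a) set" where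
  "stabiliser G a = {g \<in> G. g a = a}"

definition stabiliser2 :: "('a \<Rightarrow> 'a) set \<Rightarrow> 'a \<Rightarrow> 'a \<Rightarrow> ('a \<Rightarrow> 'a) set" where
  "stabiliser2 G a b = {g \<in> G. g a = a \<and> g b = b}"

definition quasi_transitive :: "('a \<Rightarrow> 'a) set \<Rightarrow> 'a set \<Rightarrow> bool" where
  "quasi_transitive G \<Omega> \<longleftrightarrow> perm_group G \<Omega> \<and>
     (\<exists>t::nat. t > 1 \<and> (\<forall>a\<in>\<Omega>. \<forall>b\<in>\<Omega>. a \<noteq> b \<longrightarrow> card (stabiliser2 G a b) = t))"

definition transitive_on :: "('a \<Rightarrow> 'a) set \<Rightarrow> 'a set \<Rightarrow> bool" where
  "transitive_on G \<Delta> \<longleftrightarrow> \<Delta> \<noteq> {} \<and> (\<forall>g\<in>G. g ` \<Delta> \<subseteq> \<Delta>)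
     \<and> (\<forall>a\<in>\<Delta>. \<forall>b\<in>\<Delta>. \<exists>g\<in>G. g a = b)"

definition three_halves_transitive_on :: "('a \<Rightarrow> 'a) set \<Rightarrow> 'a set \<Rightarrow> bool" where
  "three_halves_transitive_on G \<Delta> \<longleftrightarrow> transitive_on G \<Delta> \<and>
     (\<forall>a\<in>\<Delta>. \<forall>b\<in>\<Delta> - {a}. \<forall>c\<in>\<Delta> - {a}.
        card (orbit (stabiliser G a) b) = card (orbit (stabiliser G a) c))"

definition is_block :: "('a \<Rightarrow> 'a) set \<Rightarrow> 'a set \<Rightarrow> 'a set \<Rightarrow> bool" where
  "is_block G \<Delta> B \<longleftrightarrow> B \<subseteq> \<Delta> \<and> (\<forall>g\<in>G. g ` B = B \<or> g ` B \<inter> B = {})"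

definition primitive_on :: "('a \<Rightarrow> 'a) set \<Rightarrow> 'a set \<Rightarrow> bool" where
  "primitive_on G \<Delta> \<longleftrightarrow> transitive_on G \<Delta> \<and>
     (\<forall>B. is_block G \<Delta> B \<longrightarrow> card B \<le> 1 \<or> B = \<Delta>)"

end

theory Submission
  imports Defs
begin

definition subgrp :: "('a \<Rightarrow> 'a) set \<Rightarrow> ('a \<Rightarrow> 'a) set \<Rightarrow> bool" where
  "subgrp H G \<longleftrightarrow> H \<subseteq> G \<and> id \<in> H \<and> (\<forall>g\<in>H. \<forall>h\<in>H. g \<circ> h \<in> H) \<and> (\<forall>g\<in>H. inv g \<in> H)"

lemma pg_perm: "perm_group G \<Omega> \<Longrightarrow> g \<in> G \<Longrightarrow> g permutes \<Omega>"
  by (simp add: perm_group_def)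

lemma pg_facts:
  assumes "perm_group G \<Omega>" "g \<in> G"
  shows "bij g" "inj g" "inv g \<in> G" "g \<circ> inv g = id" "inv g \<circ> g = id"
    "inv g (g x) = x" "g (inv g x) = x"
proof -
  have p: "g permutes \<Omega>" using pg_perm assms .
  show "bij g" "inj g" using permutes_bij[OF p] permutes_inj[OF p] by auto
  show "inv g \<in> G" using assms by (simp add: perm_group_def)
  show a: "g \<circ> inv g = id" "inv g \<circ> g = id" using permutes_inv_o[OF p] by auto
  show "inv g (g x) = x" using a(2) by (metis comp_apply id_apply)
  show "g (inv g x) = x" using a(1) by (metis comp_apply id_apply)
qed

lemma pg_in: "perm_group G \<Omega> \<Longrightarrow> g \<in> G \<Longrightarrow> x \<in> \<Omega> \<Longrightarrow> g x \<in> \<Omega>"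
  using pg_perm permutes_in_image by metis

lemma pg_notin: "perm_group G \<Omega> \<Longrightarrow> g \<in> G \<Longrightarrow> x \<notin> \<Omega> \<Longrightarrow> g x = x"
  using pg_perm permutes_not_in by metis

lemma subgrp_G: "perm_group G \<Omega> \<Longrightarrow> subgrp G G"
  by (auto simp: perm_group_def subgrp_def)

lemma subgrp_stab: "subgrp H G \<Longrightarrow> perm_group G \<Omega> \<Longrightarrow> subgrp (stabiliser H x) G"
proof -
  assume sg: "subgrp H G" and pg: "perm_group G \<Omega>"
  have a: "H \<subseteq> G" "id \<in> H" "\<And>g h. g\<in>H \<Longrightarrow> h\<in>H \<Longrightarrow> g \<circ> h \<in> H" "\<And>g. g\<in>H \<Longrightarrow> inv g \<in> H"
    using sg unfolding subgrp_def by auto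
  have b: "inv g x = x" if "g \<in> H" "g x = x" for g
  proof -
    have "g \<in> G" using a(1) that(1) by blast
    then have "inv g (g x) = x" by (rule pg_facts(6)[OF pg])
    then show ?thesis using that(2) by simp
  qed
  show ?thesis unfolding subgrp_def stabiliser_def
    using a b by auto
qed

lemma subgrp_finite: "subgrp H G \<Longrightarrow> perm_group G \<Omega> \<Longrightarrow> finite H"
  by (meson perm_group_def rev_finite_subset subgrp_def)

lemma os_gen:
  assumes pg: "perm_group G \<Omega>" and sg: "subgrp H G"
    and compat: "\<And>h s. h \<in> H \<Longrightarrow> s \<in> H \<Longrightarrow> f (h \<circ> s) = f h \<longleftrightarrow> f s = f id"
  shows "card H = card (f ` H) * card {g\<in>H. f g = f id}"
proof -
  have fin: "finite H" using subgrp_finite sg pg .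
  let ?S = "{g\<in>H. f g = f id}"
  have fib: "card {g\<in>H. f g = y} = card ?S" if yH: "y \<in> f ` H" for y
  proof -
    obtain h where h: "h \<in> H" "y = f h" using yH by blast
    have hG: "h \<in> G" using h sg by (auto simp: subgrp_def)
    have eq: "{g\<in>H. f g = y} = (\<lambda>s. h \<circ> s) ` ?S"
    proof
      show "(\<lambda>s. h \<circ> s) ` ?S \<subseteq> {g\<in>H. f g = y}"
      proof
        fix g assume "g \<in> (\<lambda>s. h \<circ> s) ` ?S"
        then obtain s where s: "s \<in> H" "f s = f id" "g = h \<circ> s" by blast
        have "h \<circ> s \<in> H" using s(1) h(1) sg unfolding subgrp_def by blast
        moreover have "f (h \<circ> s) = f h" using compat[OF h(1) s(1)] s(2) by blast
        ultimately show "g \<in> {g\<in>H. f g = y}" using s(3) h(2) by blast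
      qed
    next
      show "{g\<in>H. f g = y} \<subseteq> (\<lambda>s. h \<circ> s) ` ?S"
      proof
        fix g assume g: "g \<in> {g\<in>H. f g = y}"
        have ih: "inv h \<in> H" using h sg by (auto simp: subgrp_def)
        have s: "inv h \<circ> g \<in> H" using ih g sg by (auto simp: subgrp_def)
        have e: "h \<circ> (inv h \<circ> g) = g" using pg_facts(4)[OF pg hG] by (simp add: o_assoc)
        have "f (h \<circ> (inv h \<circ> g)) = f h" using e g h(2) by simp
        then have "f (inv h \<circ> g) = f id" using compat[OF h(1) s] by blast
        then show "g \<in> (\<lambda>s. h \<circ> s) ` ?S" using s e by (metis (mono_tags, lifting) image_eqI mem_Collect_eq)
      qed
    qed
    have "inj_on (\<lambda>s. h \<circ> s) ?S"
    proof (rule inj_onI)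
      fix a b assume "h \<circ> a = h \<circ> b"
      then have "inv h \<circ> (h \<circ> a) = inv h \<circ> (h \<circ> b)" by (rule arg_cong)
      then show "a = b" using pg_facts(5)[OF pg hG] by (simp add: o_assoc)
    qed
    then have "card ((\<lambda>s. h \<circ> s) ` ?S) = card ?S" by (rule card_image)
    then show ?thesis using eq by simp
  qed
  have U: "H = (\<Union>y\<in>f ` H. {g\<in>H. f g = y})" by auto
  have "card H = (\<Sum>y\<in>f ` H. card {g\<in>H. f g = y})"
  proof -
    have "card (\<Union>y\<in>f ` H. {g\<in>H. f g = y}) = (\<Sum>y\<in>f ` H. card {g\<in>H. f g = y})"
      by (rule card_UN_disjoint) (use fin in auto)
    moreover have "card H = card (\<Union>y\<in>f ` H. {g\<in>H. f g = y})"
      using U by (rule arg_cong[where f=card])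
    ultimately show ?thesis by (rule trans[rotated])
  qed
  also have "\<dots> = (\<Sum>y\<in>f ` H. card ?S)" using fib by simp
  finally show ?thesis by simp
qed

lemma orbit_stab:
  assumes pg: "perm_group G \<Omega>" and sg: "subgrp H G"
  shows "card H = card (orbit H x) * card (stabiliser H x)"
proof -
  have "card H = card ((\<lambda>g. g x) ` H) * card {g\<in>H. (\<lambda>g. g x) g = (\<lambda>g. g x) id}"
  proof (rule os_gen[OF pg sg])
    fix h s assume "h \<in> H" "s \<in> H"
    then have "inj h" using pg_facts(2)[OF pg] sg by (auto simp: subgrp_def)
    then show "(h \<circ> s) x = h x \<longleftrightarrow> s x = id x" by (simp add: inj_eq)
  qed
  then show ?thesis by (simp add: orbit_def stabiliser_def)
qed

lemma setstab:
  assumes pg: "perm_group G \<Omega>" and sg: "subgrp H G"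
  shows "card H = card ((\<lambda>g. g ` B) ` H) * card {g\<in>H. g ` B = B}"
proof -
  have "card H = card ((\<lambda>g. g ` B) ` H) * card {g\<in>H. (\<lambda>g. g ` B) g = (\<lambda>g. g ` B) id}"
  proof (rule os_gen[OF pg sg])
    fix h s assume "h \<in> H" "s \<in> H"
    then have "inj h" using pg_facts(2)[OF pg] sg by (auto simp: subgrp_def)
    moreover have "(h \<circ> s) ` B = h ` (s ` B)" by (simp add: image_comp)
    ultimately show "(h \<circ> s) ` B = h ` B \<longleftrightarrow> s ` B = id ` B" by (simp add: inj_image_eq_iff)
  qed
  then show ?thesis by simp
qed


lemma orbit_self: "subgrp H G \<Longrightarrow> x \<in> orbit H x"
  unfolding orbit_def subgrp_def by (metis id_apply image_eqI)

lemma orbit_sub: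
  assumes "\<forall>g\<in>H. \<forall>y\<in>Y. g y \<in> Y" "x \<in> Y"
  shows "orbit H x \<subseteq> Y"
  using assms unfolding orbit_def by auto

lemma orbit_same:
  assumes pg: "perm_group G \<Omega>" and sg: "subgrp H G" and y: "y \<in> orbit H x"
  shows "orbit H y = orbit H x"
proof -
  obtain h where h: "h \<in> H" "y = h x" using y unfolding orbit_def by blast
  have hG: "h \<in> G" using h sg unfolding subgrp_def by blast
  have ih: "inv h \<in> H" using h sg unfolding subgrp_def by blast
  show ?thesis
  proof
    show "orbit H y \<subseteq> orbit H x"
    proof
      fix z assume "z \<in> orbit H y"
      then obtain g where g: "g \<in> H" "z = g y" unfolding orbit_def by blast
      have "g \<circ> h \<in> H" using g h sg unfolding subgrp_def by blast
      moreover have "z = (g \<circ> h) x" using g h by simp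
      ultimately show "z \<in> orbit H x" unfolding orbit_def by blast
    qed
  next
    show "orbit H x \<subseteq> orbit H y"
    proof
      fix z assume "z \<in> orbit H x"
      then obtain g where g: "g \<in> H" "z = g x" unfolding orbit_def by blast
      have "g \<circ> inv h \<in> H" using g ih sg unfolding subgrp_def by blast
      moreover have "z = (g \<circ> inv h) y" using g h pg_facts(6)[OF pg hG] by simp
      ultimately show "z \<in> orbit H y" unfolding orbit_def by blast
    qed
  qed
qed

lemma part_dvd:
  assumes pg: "perm_group G \<Omega>" and sg: "subgrp H G" and fY: "finite Y"
    and inv: "\<forall>g\<in>H. \<forall>y\<in>Y. g y \<in> Y" and m: "\<forall>y\<in>Y. card (orbit H y) = m"
  shows "m dvd card Y"
proof -
  let ?C = "orbit H ` Y"
  have U: "\<Union>?C = Y" using orbit_sub[OF inv] orbit_self[OF sg] by blast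
  have "m * card ?C = card (\<Union>?C)"
  proof (rule card_partition)
    show "finite ?C" using fY by simp
    show "finite (\<Union>?C)" using U fY by simp
    show "\<And>c. c \<in> ?C \<Longrightarrow> card c = m" using m by blast
    show "\<And>c1 c2. c1 \<in> ?C \<Longrightarrow> c2 \<in> ?C \<Longrightarrow> c1 \<noteq> c2 \<Longrightarrow> c1 \<inter> c2 = {}"
    proof -
      fix c1 c2 assume "c1 \<in> ?C" "c2 \<in> ?C" "c1 \<noteq> c2"
      then obtain y1 y2 where y: "c1 = orbit H y1" "c2 = orbit H y2" by blast
      show "c1 \<inter> c2 = {}"
      proof (rule ccontr)
        assume "c1 \<inter> c2 \<noteq> {}"
        then obtain z where "z \<in> orbit H y1" "z \<in> orbit H y2" using y by blast
        then have "orbit H y1 = orbit H z" "orbit H y2 = orbit H z"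
          using orbit_same[OF pg sg] by metis+
        then show False using \<open>c1 \<noteq> c2\<close> y by simp
      qed
    qed
  qed
  then show ?thesis using U by (metis dvd_triv_left)
qed

lemma stab2_eq: "stabiliser (stabiliser G a) b = stabiliser2 G a b"
  unfolding stabiliser_def stabiliser2_def by auto

lemma qt_card:
  assumes pg: "perm_group G \<Omega>" and tp: "\<forall>a\<in>\<Omega>. \<forall>b\<in>\<Omega>. a \<noteq> b \<longrightarrow> card (stabiliser2 G a b) = t"
    and "a \<in> \<Omega>" "b \<in> \<Omega>" "a \<noteq> b"
  shows "card (stabiliser G a) = card (orbit (stabiliser G a) b) * t"
proof -
  have sg: "subgrp (stabiliser G a) G" using subgrp_stab[OF subgrp_G[OF pg] pg] .
  show ?thesis using orbit_stab[OF pg sg, of b] stab2_eq[of G a b] tp assms(3-5) by simp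
qed

lemma block_fix:
  assumes "is_block G \<Delta> B" "g \<in> G" "x \<in> B" "g x \<in> B"
  shows "g ` B = B"
  using assms unfolding is_block_def by blast

lemma inv_img:
  assumes pg: "perm_group G \<Omega>" and g: "g \<in> G" and e: "g ` B = B"
  shows "inv g ` B = B"
proof -
  have "inv g ` B = inv g ` (g ` B)" using e by simp
  also have "\<dots> = (inv g \<circ> g) ` B" by (simp add: image_comp)
  also have "\<dots> = B" using pg_facts(5)[OF pg g] by simp
  finally show ?thesis .
qed

lemma subgrp_setstab:
  assumes pg: "perm_group G \<Omega>" and sg: "subgrp H G"
  shows "subgrp {g\<in>H. g ` B = B} G"
proof -
  have a: "H \<subseteq> G" "id \<in> H" "\<And>g h. g\<in>H \<Longrightarrow> h\<in>H \<Longrightarrow> g \<circ> h \<in> H" "\<And>g. g\<in>H \<Longrightarrow> inv g \<in> H"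
    using sg unfolding subgrp_def by auto
  have b: "inv g ` B = B" if "g \<in> H" "g ` B = B" for g
    using inv_img[OF pg _ that(2)] a(1) that(1) by blast
  have c: "(g \<circ> h) ` B = B" if "g ` B = B" "h ` B = B" for g h :: "'a \<Rightarrow> 'a"
    using that by (metis image_comp)
  show ?thesis unfolding subgrp_def using a b c by auto
qed


lemma stab_card_eq:
  assumes pg: "perm_group G \<Omega>" and D1: "\<Delta> \<subseteq> \<Omega>" and D3: "\<forall>x\<in>\<Delta>. orbit G x = \<Delta>"
    and x: "x \<in> \<Delta>" and y: "y \<in> \<Delta>"
  shows "card (stabiliser G x) = card (stabiliser G y)"
proof -
  have fD: "finite \<Delta>" using D1 pg unfolding perm_group_def using finite_subset by blast
  have pos: "card \<Delta> > 0" using fD x by (auto simp: card_gt_0_iff)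
  have "card G = card \<Delta> * card (stabiliser G x)" using orbit_stab[OF pg subgrp_G[OF pg], of x] D3 x by simp
  moreover have "card G = card \<Delta> * card (stabiliser G y)" using orbit_stab[OF pg subgrp_G[OF pg], of y] D3 y by simp
  ultimately show ?thesis using pos by simp
qed

lemma W1:
  assumes pg: "perm_group G \<Omega>"
    and tp: "\<forall>a\<in>\<Omega>. \<forall>b\<in>\<Omega>. a \<noteq> b \<longrightarrow> card (stabiliser2 G a b) = t" and t0: "t > 0"
    and D1: "\<Delta> \<subseteq> \<Omega>" and D3: "\<forall>x\<in>\<Delta>. orbit G x = \<Delta>"
    and blk: "is_block G \<Delta> B" and \<alpha>: "\<alpha> \<in> B" and \<gamma>: "\<gamma> \<in> \<Delta>" "\<gamma> \<notin> B"
  shows "\<forall>g\<in>{g\<in>stabiliser G \<gamma>. g ` B = B}. \<forall>x\<in>B. g x = x"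
proof -
  define H where "H = {g\<in>stabiliser G \<gamma>. g ` B = B}"
  have sgS: "subgrp (stabiliser G \<gamma>) G" using subgrp_stab[OF subgrp_G[OF pg] pg] .
  have sgA: "subgrp (stabiliser G \<alpha>) G" using subgrp_stab[OF subgrp_G[OF pg] pg] .
  have sgH: "subgrp H G" unfolding H_def using subgrp_setstab[OF pg sgS] .
  have BD: "B \<subseteq> \<Delta>" using blk by (simp add: is_block_def)
  have fO: "finite \<Omega>" using pg unfolding perm_group_def by blast
  have "B \<subseteq> \<Omega>" using BD D1 by (rule subset_trans)
  then have fB: "finite B" using fO by (rule finite_subset)
  have \<alpha>\<Omega>: "\<alpha> \<in> \<Omega>" using subsetD[OF D1 subsetD[OF BD \<alpha>]] .
  have \<gamma>\<Omega>: "\<gamma> \<in> \<Omega>" using subsetD[OF D1 \<gamma>(1)] .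
  have hstab: "stabiliser H x = stabiliser2 G x \<gamma>" if x: "x \<in> B" for x
  proof -
    have "g ` B = B" if "g \<in> G" "g x = x" for g using block_fix[OF blk that(1) x] that(2) x by simp
    then show ?thesis unfolding H_def stabiliser_def stabiliser2_def by auto
  qed
  have hcard: "card H = card (orbit H x) * t" if x: "x \<in> B" for x
  proof -
    have "x \<noteq> \<gamma>" using x \<gamma> by blast
    moreover have "x \<in> \<Omega>" using x BD D1 by blast
    ultimately have "card (stabiliser2 G x \<gamma>) = t" using tp \<gamma>\<Omega> by blast
    then show ?thesis using orbit_stab[OF pg sgH, of x] hstab[OF x] by simp
  qed
  define w where "w = card (orbit H \<alpha>)"
  have wx: "\<forall>x\<in>B. card (orbit H x) = w"
  proof
    fix x assume "x \<in> B"
    then have "card (orbit H x) * t = w * t" using hcard \<alpha> unfolding w_def by metis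
    then show "card (orbit H x) = w" using t0 by simp
  qed
  have wB: "w dvd card B"
  proof (rule part_dvd[OF pg sgH fB _ wx])
    show "\<forall>g\<in>H. \<forall>y\<in>B. g y \<in> B" unfolding H_def by blast
  qed
  define k where "k = card (orbit (stabiliser G \<alpha>) \<gamma>)"
  have \<alpha>\<gamma>: "\<alpha> \<noteq> \<gamma>" using \<alpha> \<gamma> by blast
  have kS: "card (stabiliser G \<alpha>) = k * t" using qt_card[OF pg tp \<alpha>\<Omega> \<gamma>\<Omega> \<alpha>\<gamma>] unfolding k_def .
  have kx: "\<forall>x\<in>B - {\<alpha>}. card (orbit (stabiliser G \<alpha>) x) = k"
  proof
    fix x assume x: "x \<in> B - {\<alpha>}"
    then have "x \<in> \<Omega>" "\<alpha> \<noteq> x" using BD D1 by blast+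
    then have "card (stabiliser G \<alpha>) = card (orbit (stabiliser G \<alpha>) x) * t"
      using qt_card[OF pg tp \<alpha>\<Omega>] by blast
    then show "card (orbit (stabiliser G \<alpha>) x) = k" using kS t0 by simp
  qed
  have kB: "k dvd card (B - {\<alpha>})"
  proof (rule part_dvd[OF pg sgA _ _ kx])
    show "finite (B - {\<alpha>})" using fB by simp
    show "\<forall>g\<in>stabiliser G \<alpha>. \<forall>y\<in>B - {\<alpha>}. g y \<in> B - {\<alpha>}"
    proof (intro ballI)
      fix g y assume g: "g \<in> stabiliser G \<alpha>" and y: "y \<in> B - {\<alpha>}"
      have gG: "g \<in> G" and ga: "g \<alpha> = \<alpha>" using g unfolding stabiliser_def by auto
      have "g ` B = B" using block_fix[OF blk gG \<alpha>] ga \<alpha> by simp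
      then have "g y \<in> B" using y by blast
      moreover have "g y \<noteq> \<alpha>"
      proof
        assume "g y = \<alpha>"
        then have "g y = g \<alpha>" using ga by simp
        then have "y = \<alpha>" using pg_facts(2)[OF pg gG] by (simp add: inj_eq)
        then show False using y by blast
      qed
      ultimately show "g y \<in> B - {\<alpha>}" by blast
    qed
  qed
  have HdvS: "card H dvd card (stabiliser G \<gamma>)"
    using setstab[OF pg sgS, of B] unfolding H_def by (metis dvd_triv_right)
  have "card (stabiliser G \<gamma>) = card (stabiliser G \<alpha>)"
    using stab_card_eq[OF pg D1 D3] \<gamma>(1) \<alpha> BD by blast
  then have "w * t dvd k * t" using HdvS hcard[OF \<alpha>] kS unfolding w_def by simp
  then have wk: "w dvd k" using t0 by simp
  have cB: "card (B - {\<alpha>}) = card B - 1" using \<alpha> by simp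
  have w1: "w dvd card B - 1" using wk kB cB dvd_trans by metis
  have cB1: "card B \<ge> 1" using \<alpha> fB by (metis One_nat_def Suc_leI card_gt_0_iff empty_iff)
  have "w dvd card B - (card B - 1)" using dvd_diff_nat[OF wB w1] .
  then have "w dvd 1" using cB1 by simp
  then have w1': "w = 1" by simp
  show ?thesis
  proof (intro ballI)
    fix g x assume g: "g \<in> {g\<in>stabiliser G \<gamma>. g ` B = B}" and x: "x \<in> B"
    have "card (orbit H x) = 1" using wx x w1' by simp
    then obtain z where z: "orbit H x = {z}" by (metis card_1_singletonE)
    have "x \<in> orbit H x" using orbit_self[OF sgH] .
    moreover have "g x \<in> orbit H x" using g unfolding H_def orbit_def by blast
    ultimately show "g x = x" using z by simp
  qed
qed


lemma arith_contra:
  fixes n s t q r :: nat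
  assumes "n \<ge> s" "t = s * q" "q \<ge> 1" "r \<le> s - 1" "q + n * (t - q) \<le> r * t"
  shows False
proof -
  have e: "t - q = (s - 1) * q" using assms(2) by (simp add: diff_mult_distrib)
  have "(s - 1) * t = s * ((s - 1) * q)" using assms(2) by simp
  also have "\<dots> \<le> n * ((s - 1) * q)" using assms(1) by (rule mult_right_mono) simp
  finally have a: "(s - 1) * t \<le> n * (t - q)" using e by simp
  have b: "r * t \<le> (s - 1) * t" using assms(4) by (rule mult_right_mono) simp
  show False using a b assms(3) assms(5) by linarith
qed


lemma core:
  assumes pg: "perm_group G \<Omega>"
    and tp: "\<forall>a\<in>\<Omega>. \<forall>b\<in>\<Omega>. a \<noteq> b \<longrightarrow> card (stabiliser2 G a b) = t" and t1: "t > 1"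
    and D1: "\<Delta> \<subseteq> \<Omega>" and D2: "\<forall>g\<in>G. \<forall>y\<in>\<Delta>. g y \<in> \<Delta>" and D3: "\<forall>x\<in>\<Delta>. orbit G x = \<Delta>"
    and blk: "is_block G \<Delta> B" and a1: "a \<in> B" and a2: "a' \<in> B" and aa: "a \<noteq> a'"
    and c0: "c \<in> \<Delta>" "c \<notin> B"
  shows False
proof -
  have t0: "t > 0" using t1 by simp
  have BD: "B \<subseteq> \<Delta>" using blk by (simp add: is_block_def)
  have fO: "finite \<Omega>" using pg unfolding perm_group_def by simp
  have fG: "finite G" using pg unfolding perm_group_def by simp
  have fD: "finite \<Delta>" using D1 fO by (rule finite_subset)
  have aD: "a \<in> \<Delta>" "a' \<in> \<Delta>" using a1 a2 BD by auto
  have aO: "a \<in> \<Omega>" "a' \<in> \<Omega>" using aD D1 by auto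
  have cS2: "card (stabiliser2 G x y) = t" if "x \<in> \<Omega>" "y \<in> \<Omega>" "x \<noteq> y" for x y
    using tp that by simp
  have fS2: "finite (stabiliser2 G x y)" for x y
    using fG unfolding stabiliser2_def by simp
  have fixB: "g y = y" if c: "c' \<in> \<Delta>" "c' \<notin> B" and x: "x \<in> B" and g: "g \<in> stabiliser2 G x c'"
      and y: "y \<in> B" for c' x g y
  proof -
    have gG: "g \<in> G" and gx: "g x = x" and gc: "g c' = c'" using g unfolding stabiliser2_def by auto
    have "g ` B = B" using block_fix[OF blk gG x] gx x by simp
    then have "g \<in> {g\<in>stabiliser G c'. g ` B = B}" using gG gc unfolding stabiliser_def by simp
    then show ?thesis using W1[OF pg tp t0 D1 D3 blk x c] y by blast
  qed
  define K where "K = stabiliser2 G a a'"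
  have fK: "finite K" unfolding K_def by (rule fS2)
  have cK: "card K = t" unfolding K_def using cS2 aO aa by simp
  have Keq: "K = stabiliser2 G a c'" if c: "c' \<in> \<Delta>" "c' \<notin> B" for c'
  proof -
    have sub: "stabiliser2 G a c' \<subseteq> K"
    proof
      fix g assume g: "g \<in> stabiliser2 G a c'"
      have "g a' = a'" using fixB[OF c a1 g a2] .
      then show "g \<in> K" using g unfolding K_def stabiliser2_def by simp
    qed
    have "a \<noteq> c'" using a1 c by auto
    moreover have "c' \<in> \<Omega>" using c D1 by auto
    ultimately have "card (stabiliser2 G a c') = card K" using cS2 aO cK by simp
    then show ?thesis using card_subset_eq[OF fK sub] by simp
  qed
  have Kfix: "k y = y" if k: "k \<in> K" and y: "y \<in> \<Delta>" for k y
  proof (cases "y \<in> B")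
    case True
    have "k \<in> stabiliser2 G a c" using k Keq[OF c0] by simp
    then show ?thesis using fixB[OF c0 a1 _ True] by simp
  next
    case False
    have "k \<in> stabiliser2 G a y" using k Keq[OF y False] by simp
    then show ?thesis unfolding stabiliser2_def by simp
  qed
  have KG: "K \<subseteq> G" unfolding K_def stabiliser2_def by auto
  have KS2: "stabiliser2 G x y = K" if "x \<in> \<Delta>" "y \<in> \<Delta>" "x \<noteq> y" for x y
  proof -
    have sub: "K \<subseteq> stabiliser2 G x y" using KG Kfix that unfolding stabiliser2_def by auto
    have "card (stabiliser2 G x y) = card K" using cS2 that D1 cK by auto
    then show ?thesis using card_subset_eq[OF fS2 sub] by simp
  qed
  have Knorm: "g \<circ> k \<circ> inv g \<in> K" if g: "g \<in> G" and k: "k \<in> K" for g k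
  proof -
    have kG: "k \<in> G" using k KG by auto
    have ig: "inv g \<in> G" using pg_facts(3)[OF pg g] .
    have mem: "g \<circ> k \<circ> inv g \<in> G" using pg g kG ig unfolding perm_group_def by simp
    have fx: "(g \<circ> k \<circ> inv g) y = y" if y: "y \<in> \<Delta>" for y
    proof -
      have "inv g y \<in> \<Delta>" using D2 ig y by simp
      then have "k (inv g y) = inv g y" using Kfix[OF k] by simp
      then show ?thesis using pg_facts(7)[OF pg g] by simp
    qed
    show ?thesis unfolding K_def stabiliser2_def using mem fx aD by simp
  qed
  have sgK: "subgrp K G"
    unfolding K_def stab2_eq[symmetric] using subgrp_stab[OF subgrp_stab[OF subgrp_G[OF pg] pg] pg] .
  obtain k0 where k0: "k0 \<in> K" "k0 \<noteq> id"
  proof (rule ccontr)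
    assume "\<not> thesis"
    then have "\<forall>k\<in>K. k = id" using that by blast
    then have "K \<subseteq> {id}" by auto
    then have "card K \<le> 1" using card_mono[of "{id}" K] by simp
    then show False using cK t1 by simp
  qed
  obtain b where b: "k0 b \<noteq> b" using k0(2) by (metis eq_id_iff)
  have k0G: "k0 \<in> G" using k0 KG by auto
  have bO: "b \<in> \<Omega>" using pg_notin[OF pg k0G] b by blast
  have bD: "b \<notin> \<Delta>" using Kfix[OF k0(1)] b by blast
  define b' where "b' = k0 b"
  have b'O: "b' \<in> \<Omega>" unfolding b'_def using pg_in[OF pg k0G bO] .
  have bb: "b \<noteq> b'" unfolding b'_def using b by simp
  define Sb where "Sb = stabiliser G b"
  have sgSb: "subgrp Sb G" unfolding Sb_def using subgrp_stab[OF subgrp_G[OF pg] pg] .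
  have cSb: "card Sb = card (orbit Sb b') * t" unfolding Sb_def using qt_card[OF pg tp bO b'O bb] .
  define Ob where "Ob = orbit K b"
  have fOb: "finite Ob" unfolding Ob_def orbit_def using fK by simp
  have bOb: "b \<in> Ob" unfolding Ob_def using orbit_self[OF sgK] .
  have subO: "orbit Sb b' \<subseteq> Ob - {b}"
  proof
    fix z assume "z \<in> orbit Sb b'"
    then obtain g where g: "g \<in> Sb" "z = g b'" unfolding orbit_def by blast
    have gG: "g \<in> G" and gb: "g b = b" using g unfolding Sb_def stabiliser_def by auto
    have igb: "inv g b = b" using pg_facts(6)[OF pg gG, of b] gb by simp
    have "(g \<circ> k0 \<circ> inv g) b = z" using g(2) igb unfolding b'_def by simp
    moreover have "g \<circ> k0 \<circ> inv g \<in> K" using Knorm[OF gG k0(1)] .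
    ultimately have "z \<in> Ob" unfolding Ob_def orbit_def by (metis image_eqI)
    moreover have "z \<noteq> b"
    proof
      assume "z = b"
      then have "g b' = g b" using g(2) gb by simp
      then have "b' = b" using pg_facts(2)[OF pg gG] by (simp add: inj_eq)
      then show False using bb by simp
    qed
    ultimately show "z \<in> Ob - {b}" by simp
  qed
  have oSb: "card (orbit Sb b') \<le> card Ob - 1"
    using card_mono[OF _ subO] fOb bOb by simp
  define Q where "Q = stabiliser K b"
  define q where "q = card Q"
  define s where "s = card Ob"
  have tq: "t = s * q" unfolding s_def q_def Q_def Ob_def using orbit_stab[OF pg sgK, of b] cK by simp
  have idQ: "id \<in> Q" unfolding Q_def stabiliser_def using sgK unfolding subgrp_def by simp
  have fQ: "finite Q" unfolding Q_def stabiliser_def using fK by simp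
  have q1: "q \<ge> 1" unfolding q_def using idQ fQ by (metis One_nat_def Suc_leI card_gt_0_iff empty_iff)
  define A where "A x = stabiliser2 G x b - Q" for x
  have QS2: "Q \<subseteq> stabiliser2 G x b" if "x \<in> \<Delta>" for x
    using that KG Kfix unfolding Q_def stabiliser_def stabiliser2_def by auto
  have cA: "card (A x) = t - q" if x: "x \<in> \<Delta>" for x
  proof -
    have "x \<noteq> b" using x bD by auto
    then have "card (stabiliser2 G x b) = t" using cS2 x D1 bO by auto
    then show ?thesis unfolding A_def q_def using card_Diff_subset[OF fQ QS2[OF x]] by simp
  qed
  have fA: "finite (A x)" for x unfolding A_def using fS2 by simp
  have disj: "A x \<inter> A y = {}" if "x \<in> \<Delta>" "y \<in> \<Delta>" "x \<noteq> y" for x y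
  proof -
    have "g \<in> Q" if "g \<in> stabiliser2 G x b" "g \<in> stabiliser2 G y b" for g
    proof -
      have "g \<in> stabiliser2 G x y" using that unfolding stabiliser2_def by simp
      then have "g \<in> K" using KS2[OF \<open>x \<in> \<Delta>\<close> \<open>y \<in> \<Delta>\<close> \<open>x \<noteq> y\<close>] by simp
      then show ?thesis using that unfolding Q_def stabiliser_def stabiliser2_def by simp
    qed
    then show ?thesis unfolding A_def by auto
  qed
  have cU: "card (\<Union>(A ` \<Delta>)) = (\<Sum>x\<in>\<Delta>. card (A x))"
    by (rule card_UN_disjoint[OF fD]) (use fA disj in auto)
  also have "\<dots> = card \<Delta> * (t - q)" using cA by simp
  finally have cU': "card (\<Union>(A ` \<Delta>)) = card \<Delta> * (t - q)" .
  have disjQ: "Q \<inter> \<Union>(A ` \<Delta>) = {}" unfolding A_def by auto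
  have fU: "finite (\<Union>(A ` \<Delta>))" using fD fA by simp
  have cQU: "card (Q \<union> \<Union>(A ` \<Delta>)) = q + card \<Delta> * (t - q)"
    using card_Un_disjoint[OF fQ fU disjQ] cU' unfolding q_def by simp
  have subSb: "Q \<union> \<Union>(A ` \<Delta>) \<subseteq> Sb"
    unfolding Q_def A_def Sb_def stabiliser_def stabiliser2_def using KG by auto
  have fSb: "finite Sb" unfolding Sb_def stabiliser_def using fG by simp
  have bound: "q + card \<Delta> * (t - q) \<le> card Sb"
    using card_mono[OF fSb subSb] cQU by simp
  have sD: "s \<le> card \<Delta>"
  proof -
    have sgA: "subgrp (stabiliser G a) G" using subgrp_stab[OF subgrp_G[OF pg] pg] .
    have KA: "K \<subseteq> stabiliser G a" unfolding K_def stabiliser_def stabiliser2_def by auto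
    have s1: "Ob \<subseteq> orbit (stabiliser G a) b" unfolding Ob_def orbit_def using KA by auto
    have ab: "a \<noteq> b" using aD bD by auto
    have "card (orbit (stabiliser G a) b) * t = card (orbit (stabiliser G a) a') * t"
      using qt_card[OF pg tp aO(1) bO ab] qt_card[OF pg tp aO(1) aO(2) aa] by linarith
    then have e: "card (orbit (stabiliser G a) b) = card (orbit (stabiliser G a) a')" using t0 by simp
    have "\<forall>g\<in>stabiliser G a. \<forall>y\<in>\<Delta>. g y \<in> \<Delta>" using D2 unfolding stabiliser_def by auto
    then have s2: "orbit (stabiliser G a) a' \<subseteq> \<Delta>" using orbit_sub aD(2) by metis
    have fo: "finite (orbit (stabiliser G a) b)" unfolding orbit_def stabiliser_def using fG by simp
    have "s \<le> card (orbit (stabiliser G a) b)" unfolding s_def using card_mono[OF fo s1] .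
    also have "\<dots> \<le> card \<Delta>" using e card_mono[OF fD s2] by simp
    finally show ?thesis .
  qed
  show False
  proof (rule arith_contra[OF sD tq q1])
    show "card (orbit Sb b') \<le> s - 1" using oSb unfolding s_def .
    show "q + card \<Delta> * (t - q) \<le> card (orbit Sb b') * t" using bound cSb by simp
  qed
qed


lemma orbit_props:
  assumes pg: "perm_group G \<Omega>" and a: "a \<in> \<Omega>"
  shows "orbit G a \<subseteq> \<Omega>" "\<forall>g\<in>G. \<forall>y\<in>orbit G a. g y \<in> orbit G a"
    "\<forall>x\<in>orbit G a. orbit G x = orbit G a"
proof -
  show "orbit G a \<subseteq> \<Omega>" using orbit_sub[of G \<Omega> a] pg_in[OF pg] a by blast
  show "\<forall>g\<in>G. \<forall>y\<in>orbit G a. g y \<in> orbit G a"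
  proof (intro ballI)
    fix g y assume g: "g \<in> G" and y: "y \<in> orbit G a"
    then obtain h where h: "h \<in> G" "y = h a" unfolding orbit_def by blast
    have "g \<circ> h \<in> G" using g h pg unfolding perm_group_def by simp
    moreover have "g y = (g \<circ> h) a" using h by simp
    ultimately show "g y \<in> orbit G a" unfolding orbit_def by (metis image_eqI)
  qed
  show "\<forall>x\<in>orbit G a. orbit G x = orbit G a" using orbit_same[OF pg subgrp_G[OF pg]] by blast
qed

theorem mainTheorem3:
  fixes G :: "('a \<Rightarrow> 'a) set" and \<Omega> :: "'a set"
  assumes "perm_group G \<Omega>"
    and "quasi_transitive G \<Omega>"
    and "card (orbits G \<Omega>) > 1"
  shows "\<forall>\<Delta> \<in> orbits G \<Omega>. primitive_on G \<Delta> \<and> three_halves_transitive_on G \<Delta>"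
proof -
  note pg = assms(1)
  obtain t where t1: "t > 1" and tp: "\<forall>a\<in>\<Omega>. \<forall>b\<in>\<Omega>. a \<noteq> b \<longrightarrow> card (stabiliser2 G a b) = t"
    using assms(2) unfolding quasi_transitive_def by blast
  have t0: "t > 0" using t1 by simp
  have fO: "finite \<Omega>" using pg unfolding perm_group_def by simp
  show ?thesis
  proof
    fix \<Delta> assume "\<Delta> \<in> orbits G \<Omega>"
    then obtain a0 where a0: "a0 \<in> \<Omega>" and Dd: "\<Delta> = orbit G a0" unfolding orbits_def by blast
    have D1: "\<Delta> \<subseteq> \<Omega>" using orbit_props(1)[OF pg a0] Dd by simp
    have D2: "\<forall>g\<in>G. \<forall>y\<in>\<Delta>. g y \<in> \<Delta>" using orbit_props(2)[OF pg a0] Dd by simp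
    have D3: "\<forall>x\<in>\<Delta>. orbit G x = \<Delta>" using orbit_props(3)[OF pg a0] Dd by simp
    have fD: "finite \<Delta>" using D1 fO by (rule finite_subset)
    have tr: "transitive_on G \<Delta>"
      unfolding transitive_on_def
    proof (intro conjI ballI)
      show "\<Delta> \<noteq> {}" using orbit_self[OF subgrp_G[OF pg], of a0] Dd by auto
      show "\<And>g. g \<in> G \<Longrightarrow> g ` \<Delta> \<subseteq> \<Delta>" using D2 by auto
      fix x y assume x: "x \<in> \<Delta>" and y: "y \<in> \<Delta>"
      then have "y \<in> orbit G x" using D3 by simp
      then show "\<exists>g\<in>G. g x = y" unfolding orbit_def by auto
    qed
    have th: "three_halves_transitive_on G \<Delta>"
      unfolding three_halves_transitive_on_def
    proof (intro conjI ballI tr)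
      fix a b c assume a: "a \<in> \<Delta>" and b: "b \<in> \<Delta> - {a}" and c: "c \<in> \<Delta> - {a}"
      have aO: "a \<in> \<Omega>" "b \<in> \<Omega>" "c \<in> \<Omega>" using a b c D1 by auto
      have "a \<noteq> b" "a \<noteq> c" using b c by auto
      then have "card (orbit (stabiliser G a) b) * t = card (orbit (stabiliser G a) c) * t"
        using qt_card[OF pg tp aO(1) aO(2)] qt_card[OF pg tp aO(1) aO(3)] by linarith
      then show "card (orbit (stabiliser G a) b) = card (orbit (stabiliser G a) c)" using t0 by simp
    qed
    have pr: "primitive_on G \<Delta>"
      unfolding primitive_on_def
    proof (intro conjI allI impI tr)
      fix B assume blk: "is_block G \<Delta> B"
      show "card B \<le> 1 \<or> B = \<Delta>"
      proof (rule ccontr)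
        assume "\<not> (card B \<le> 1 \<or> B = \<Delta>)"
        then have cB: "card B > 1" and BD': "B \<noteq> \<Delta>" by auto
        have BD: "B \<subseteq> \<Delta>" using blk by (simp add: is_block_def)
        have fB: "finite B" using BD fD by (rule finite_subset)
        obtain a where a: "a \<in> B" using cB by (metis card.empty ex_in_conv not_less_zero)
        have "card (B - {a}) > 0" using cB a fB by simp
        then obtain a' where a': "a' \<in> B - {a}" by (metis card.empty ex_in_conv less_irrefl)
        obtain c where c: "c \<in> \<Delta>" "c \<notin> B" using BD BD' by blast
        show False using core[OF pg tp t1 D1 D2 D3 blk a _ _ c] a' by blast
      qed
    qed
    show "primitive_on G \<Delta> \<and> three_halves_transitive_on G \<Delta>" using pr th by simp
  qed
qed

end
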